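(* Let $n\geq 4$ and $m\geq 1$ be integers, let $K$ be an infinite field, and let $p(x_1,\ldots,x_m)\in K\langle x_1,\ldots,x_m\rangle$ be a noncommutative polynomial with zero constant term such that $\mathrm{ord}(p)=n-2$. Then $p(T_n(K))=T_n(K)^{(n-3)}$.
   Context: $T_n(K)$ denotes the algebra of $n\times n$ upper triangular matrices over $K$; $T_n(K)^{(t)}$ denotes the set of upper triangular matrices whose $(i,j)$ entries vanish whenever $j-i\leq t$ (so $T_n(K)^{(n-3)}$ consists of the matrices supported on the positions $(1,n-1),(2,n),(1,n)$). $p(T_n(K))=\{p(a_1,\ldots,a_m):a_i\in T_n(K)\}$. The order $\mathrm{ord}(p)$ is the least positive integer $r$ with $p(T_r(K))=\{0\}$ but $p(T_{r+1}(K))\neq\{0\}$ (with $T_1(K)=K$). *)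

theory Defs
  imports Main
begin

text \<open>Square matrices of variable size r are represented as functions
  nat => nat => 'a (0-indexed), required to vanish outside {0..<r} x {0..<r}.\<close>

type_synonym 'a sqmat = "nat \<Rightarrow> nat \<Rightarrow> 'a"

definition mat_mul :: "nat \<Rightarrow> 'a::comm_ring_1 sqmat \<Rightarrow> 'a sqmat \<Rightarrow> 'a sqmat" where
  "mat_mul r A B = (\<lambda>i j. if i < r \<and> j < r then (\<Sum>k<r. A i k * B k j) else 0)"

definition mat_one :: "nat \<Rightarrow> 'a::comm_ring_1 sqmat" where
  "mat_one r = (\<lambda>i j. if i < r \<and> j < r \<and> i = j then 1 else 0)"

definition mat_zero :: "'a::comm_ring_1 sqmat" where
  "mat_zero = (\<lambda>i j. 0)"

definition upper_tri :: "nat \<Rightarrow> 'a::comm_ring_1 sqmat set" where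
  "upper_tri r = {A. \<forall>i j. (r \<le> i \<or> r \<le> j \<or> j < i) \<longrightarrow> A i j = 0}"

definition upper_tri_t :: "nat \<Rightarrow> nat \<Rightarrow> 'a::comm_ring_1 sqmat set" where
  "upper_tri_t r t = {A \<in> upper_tri r. \<forall>i j. j \<le> i + t \<longrightarrow> A i j = 0}"

text \<open>Noncommutative polynomials in K<x_0,...,x_(m-1)>: a coefficient function on
  words (lists of variable indices) with finite support, all letters < m.\<close>
definition nc_poly :: "nat \<Rightarrow> (nat list \<Rightarrow> 'a::comm_ring_1) \<Rightarrow> bool" where
  "nc_poly m c \<longleftrightarrow> finite {w. c w \<noteq> 0} \<and> (\<forall>w. c w \<noteq> 0 \<longrightarrow> (\<forall>x\<in>set w. x < m))"

fun word_eval :: "nat \<Rightarrow> (nat \<Rightarrow> 'a::comm_ring_1 sqmat) \<Rightarrow> nat list \<Rightarrow> 'a sqmat" where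
  "word_eval r a [] = mat_one r"
| "word_eval r a (x # w) = mat_mul r (a x) (word_eval r a w)"

definition nc_eval :: "nat \<Rightarrow> (nat list \<Rightarrow> 'a::comm_ring_1) \<Rightarrow> (nat \<Rightarrow> 'a sqmat) \<Rightarrow> 'a sqmat" where
  "nc_eval r c a = (\<lambda>i j. \<Sum>w\<in>{w. c w \<noteq> 0}. c w * word_eval r a w i j)"

definition poly_image :: "nat \<Rightarrow> (nat list \<Rightarrow> 'a::comm_ring_1) \<Rightarrow> nat \<Rightarrow> 'a sqmat set" where
  "poly_image m c r = {nc_eval r c a | a. \<forall>i<m. a i \<in> upper_tri r}"

definition has_ord :: "nat \<Rightarrow> (nat list \<Rightarrow> 'a::comm_ring_1) \<Rightarrow> nat \<Rightarrow> bool" where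
  "has_ord m c s \<longleftrightarrow>
     (0 < s \<and> poly_image m c s = {mat_zero} \<and> poly_image m c (Suc s) \<noteq> {mat_zero}) \<and>
     (\<forall>r. 0 < r \<and> r < s \<longrightarrow> \<not> (poly_image m c r = {mat_zero} \<and> poly_image m c (Suc r) \<noteq> {mat_zero}))"

end

theory Submission
  imports Defs "HOL-Computational_Algebra.Polynomial"
begin

lemma mat_mul_out: "\<not>(i<r \<and> j<r) \<Longrightarrow> mat_mul r A B i j = 0"
  by (auto simp add: mat_mul_def)

lemma mat_mul_in: "i<r \<Longrightarrow> j<r \<Longrightarrow> mat_mul r A B i j = (\<Sum>k<r. A i k * B k j)"
  by (simp add: mat_mul_def)

lemma upper_triD: "A \<in> upper_tri r \<Longrightarrow> r \<le> i \<or> r \<le> j \<or> j < i \<Longrightarrow> A i j = 0"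
  unfolding upper_tri_def by blast

lemma mat_mul_upper:
  assumes hA: "A \<in> upper_tri r" and hB: "B \<in> upper_tri r"
  shows "mat_mul r A B \<in> upper_tri r"
  unfolding upper_tri_def
proof (clarify)
  fix i j assume h: "r \<le> i \<or> r \<le> j \<or> j < i"
  show "mat_mul r A B i j = 0"
  proof (cases "i<r \<and> j<r")
    case True
    then have "j < i" using h by auto
    have "A i k * B k j = 0" for k
    proof (cases "k < i")
      case True then show ?thesis using upper_triD[OF hA] by simp
    next
      case False then have "j < k" using \<open>j<i\<close> by simp
      then show ?thesis using upper_triD[OF hB] by simp
    qed
    then show ?thesis using True by (simp add: mat_mul_def)
  qed (auto simp add: mat_mul_def)
qed

lemma mat_one_upper: "mat_one r \<in> upper_tri r" by (auto simp: upper_tri_def mat_one_def)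

lemma mat_zero_upper: "mat_zero \<in> upper_tri r" by (auto simp: upper_tri_def mat_zero_def)

lemma word_eval_upper: "(\<forall>x\<in>set w. a x \<in> upper_tri r) \<Longrightarrow> word_eval r a w \<in> upper_tri r"
  by (induction w) (auto intro: mat_mul_upper mat_one_upper)

lemma nc_poly_letters: "nc_poly m c \<Longrightarrow> c w \<noteq> 0 \<Longrightarrow> x \<in> set w \<Longrightarrow> x < m"
  by (simp add: nc_poly_def)

lemma nc_eval_upper:
  assumes "nc_poly m c" "\<forall>i<m. a i \<in> upper_tri r"
  shows "nc_eval r c a \<in> upper_tri r"
  unfolding upper_tri_def nc_eval_def
proof (clarify)
  fix i j assume h: "r \<le> i \<or> r \<le> j \<or> j < i"
  show "(\<Sum>w\<in>{w. c w \<noteq> 0}. c w * word_eval r a w i j) = 0"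
  proof (rule sum.neutral, clarify)
    fix w assume "c w \<noteq> 0"
    then have "\<forall>x\<in>set w. a x \<in> upper_tri r" using assms nc_poly_letters by blast
    then have "word_eval r a w i j = 0" using word_eval_upper upper_triD h by blast
    then show "c w * word_eval r a w i j = 0" by simp
  qed
qed

definition restr :: "nat \<Rightarrow> nat \<Rightarrow> 'a::comm_ring_1 sqmat \<Rightarrow> 'a sqmat" where
  "restr L s A = (\<lambda>i j. if i<s \<and> j<s then A (i+L) (j+L) else 0)"

lemma restr_upper: "A \<in> upper_tri r \<Longrightarrow> restr L s A \<in> upper_tri s"
  by (auto simp: upper_tri_def restr_def)

lemma mat_mul_restr:
  assumes hA: "A \<in> upper_tri r" and hB: "B \<in> upper_tri r" and "L + s \<le> r" "i<s" "j<s"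
  shows "mat_mul r A B (i+L) (j+L) = (\<Sum>l<s. A (i+L) (l+L) * B (l+L) (j+L))"
proof -
  have "mat_mul r A B (i+L) (j+L) = (\<Sum>l<r. A (i+L) l * B l (j+L))"
    using assms by (simp add: mat_mul_def)
  also have "\<dots> = (\<Sum>l\<in>{L..<L+s}. A (i+L) l * B l (j+L))"
  proof (rule sum.mono_neutral_right)
    show "finite {..<r}" by simp
    show "{L..<L + s} \<subseteq> {..<r}" using assms by auto
    show "\<forall>l\<in>{..<r} - {L..<L + s}. A (i + L) l * B l (j + L) = 0"
    proof
      fix l assume "l \<in> {..<r} - {L..<L + s}"
      then have "l < L \<or> L + s \<le> l" by auto
      then show "A (i + L) l * B l (j + L) = 0"
      proof
        assume "l < L" then show ?thesis using upper_triD[OF hA, of "i+L" l] by simp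
      next
        assume "L + s \<le> l" then show ?thesis using upper_triD[OF hB, of l "j+L"] \<open>j<s\<close> by simp
      qed
    qed
  qed
  also have "\<dots> = (\<Sum>l\<in>{0..<s}. A (i+L) (l+L) * B (l+L) (j+L))"
    using sum.shift_bounds_nat_ivl[of "\<lambda>l. A (i+L) l * B l (j+L)" 0 L s]
    by (simp add: add.commute)
  finally show ?thesis by (simp add: atLeast0LessThan)
qed

lemma word_eval_restr:
  assumes "\<forall>x\<in>set w. a x \<in> upper_tri r" "L + s \<le> r" "i<s" "j<s"
  shows "word_eval r a w (i+L) (j+L) = word_eval s (\<lambda>x. restr L s (a x)) w i j"
  using assms
proof (induction w arbitrary: i j)
  case Nil
  then show ?case by (auto simp: mat_one_def)
next
  case (Cons x w)
  have ax: "a x \<in> upper_tri r" using Cons.prems by simp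
  have W: "word_eval r a w \<in> upper_tri r" using Cons.prems by (intro word_eval_upper) simp
  have "word_eval r a (x#w) (i+L) (j+L) = mat_mul r (a x) (word_eval r a w) (i+L) (j+L)" by simp
  also have "\<dots> = (\<Sum>l<s. a x (i+L) (l+L) * word_eval r a w (l+L) (j+L))"
    by (rule mat_mul_restr[OF ax W Cons.prems(2-4)])
  also have "\<dots> = (\<Sum>l<s. restr L s (a x) i l * word_eval s (\<lambda>x. restr L s (a x)) w l j)"
    using Cons by (intro sum.cong) (auto simp: restr_def)
  also have "\<dots> = word_eval s (\<lambda>x. restr L s (a x)) (x#w) i j"
    using Cons.prems by (simp add: mat_mul_def)
  finally show ?case .
qed

lemma poly_image_zero:
  assumes "poly_image m c s = {mat_zero}" "\<forall>k<m. b k \<in> upper_tri s"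
  shows "nc_eval s c b = mat_zero"
proof -
  have "nc_eval s c b \<in> poly_image m c s" using assms(2) unfolding poly_image_def by blast
  then show ?thesis using assms(1) by simp
qed

lemma nc_window_zero:
  assumes "nc_poly m c" "poly_image m c s = {mat_zero}" "\<forall>k<m. a k \<in> upper_tri r"
   "L + s \<le> r" "L \<le> i" "i < L+s" "L \<le> j" "j < L + s"
  shows "nc_eval r c a i j = 0"
proof -
  define b where "b = (\<lambda>k. restr L s (a k))"
  have b: "\<forall>k<m. b k \<in> upper_tri s" using assms(3) restr_upper b_def by blast
  have i: "i = (i - L) + L" and j: "j = (j - L) + L" using assms by auto
  have "nc_eval r c a i j = (\<Sum>w\<in>{w. c w \<noteq> 0}. c w * word_eval r a w ((i-L)+L) ((j-L)+L))"
    unfolding nc_eval_def using i j by simp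
  also have "\<dots> = (\<Sum>w\<in>{w. c w \<noteq> 0}. c w * word_eval s b w (i-L) (j-L))"
  proof (rule sum.cong[OF refl])
    fix w assume "w \<in> {w. c w \<noteq> 0}"
    then have "\<forall>x\<in>set w. a x \<in> upper_tri r" using assms(1,3) nc_poly_letters by blast
    then show "c w * word_eval r a w (i - L + L) (j - L + L) = c w * word_eval s b w (i - L) (j - L)"
      using word_eval_restr[of w a r L s "i-L" "j-L"] assms b_def by simp
  qed
  also have "\<dots> = nc_eval s c b (i-L) (j-L)" by (simp add: nc_eval_def)
  also have "\<dots> = 0" using poly_image_zero[OF assms(2) b] by (simp add: mat_zero_def)
  finally show ?thesis .
qed


definition emb :: "nat \<Rightarrow> (nat \<Rightarrow> nat) \<Rightarrow> 'a::comm_ring_1 sqmat \<Rightarrow> 'a sqmat" where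
  "emb k \<sigma> A = (\<lambda>i j. if i \<in> \<sigma> ` {..<k} \<and> j \<in> \<sigma> ` {..<k}
      then A (inv_into {..<k} \<sigma> i) (inv_into {..<k} \<sigma> j) else 0)"

lemma emb_at: "inj_on \<sigma> {..<k} \<Longrightarrow> a<k \<Longrightarrow> b<k \<Longrightarrow> emb k \<sigma> A (\<sigma> a) (\<sigma> b) = A a b"
  by (simp add: emb_def inv_into_f_f)

lemma emb_off: "i \<notin> \<sigma>`{..<k} \<or> j \<notin> \<sigma>`{..<k} \<Longrightarrow> emb k \<sigma> A i j = 0"
  by (auto simp: emb_def)

lemma emb_outside:
  assumes "\<sigma> ` {..<k} \<subseteq> {..<r}" "\<not>(i<r \<and> j<r)"
  shows "emb k \<sigma> A i j = 0"
  using assms by (intro emb_off) auto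

lemma emb_cong:
  assumes "\<And>a b. a<k \<Longrightarrow> b<k \<Longrightarrow> A' a b = A a b"
  shows "emb k \<sigma> A' = emb k \<sigma> A"
proof -
  have "\<And>x. x<k \<Longrightarrow> inv_into {..<k} \<sigma> (\<sigma> x) < k"
    by (metis inv_into_into image_eqI lessThan_iff)
  then show ?thesis unfolding emb_def using assms by (auto intro!: ext)
qed

lemma times_if1: "(x::'a::comm_ring_1) * (if P then 1 else 0) = (if P then x else 0)" by simp
lemma times_if2: "(if P then 1 else 0) * (x::'a::comm_ring_1) = (if P then x else 0)" by simp

lemma right_one:
  assumes "\<And>i j. \<not>(i<r \<and> j<r) \<Longrightarrow> X i j = 0"
  shows "mat_mul r X (mat_one r) = X"
proof (intro ext)
  fix i j
  show "mat_mul r X (mat_one r) i j = X i j"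
  proof (cases "i<r \<and> j<r")
    case True
    then have "mat_mul r X (mat_one r) i j = (\<Sum>l<r. if l = j then X i l else 0)"
      by (auto simp: mat_mul_def mat_one_def times_if1 times_if2 intro!: sum.cong)
    also have "\<dots> = X i j" using True by simp
    finally show ?thesis .
  qed (use assms in \<open>auto simp: mat_mul_def\<close>)
qed

lemma left_one:
  assumes "\<And>i j. \<not>(i<r \<and> j<r) \<Longrightarrow> X i j = 0"
  shows "mat_mul r (mat_one r) X = X"
proof (intro ext)
  fix i j
  show "mat_mul r (mat_one r) X i j = X i j"
  proof (cases "i<r \<and> j<r")
    case True
    then have "mat_mul r (mat_one r) X i j = (\<Sum>l<r. if i = l then X l j else 0)"
      by (auto simp: mat_mul_def mat_one_def times_if1 times_if2 intro!: sum.cong)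
    also have "\<dots> = X i j" using True by simp
    finally show ?thesis .
  qed (use assms in \<open>auto simp: mat_mul_def\<close>)
qed

lemma mat_mul_vanish: "\<not>(i<r \<and> j<r) \<Longrightarrow> mat_mul r A B i j = 0"
  by (auto simp: mat_mul_def)

lemma upper_vanish: "A \<in> upper_tri r \<Longrightarrow> \<not>(i<r \<and> j<r) \<Longrightarrow> A i j = 0"
  by (auto simp: upper_tri_def)

lemma emb_mul:
  assumes inj: "inj_on \<sigma> {..<k}" and sub: "\<sigma> ` {..<k} \<subseteq> {..<r}"
  shows "mat_mul r (emb k \<sigma> A) (emb k \<sigma> B) = emb k \<sigma> (mat_mul k A B)"
proof (intro ext)
  fix i j
  show "mat_mul r (emb k \<sigma> A) (emb k \<sigma> B) i j = emb k \<sigma> (mat_mul k A B) i j"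
  proof (cases "i \<in> \<sigma>`{..<k} \<and> j \<in> \<sigma>`{..<k}")
    case True
    then obtain a b where ab: "a<k" "b<k" "i = \<sigma> a" "j = \<sigma> b" by auto
    then have ir: "i < r" "j < r" using sub by auto
    have "mat_mul r (emb k \<sigma> A) (emb k \<sigma> B) i j = (\<Sum>l<r. emb k \<sigma> A i l * emb k \<sigma> B l j)"
      using ir by (simp add: mat_mul_def)
    also have "\<dots> = (\<Sum>l\<in>\<sigma>`{..<k}. emb k \<sigma> A i l * emb k \<sigma> B l j)"
      by (rule sum.mono_neutral_right) (use sub in \<open>auto simp: emb_off\<close>)
    also have "\<dots> = (\<Sum>l<k. emb k \<sigma> A i (\<sigma> l) * emb k \<sigma> B (\<sigma> l) j)"
      using sum.reindex[OF inj] by (simp add: comp_def)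
    also have "\<dots> = (\<Sum>l<k. A a l * B l b)" using ab inj by (simp add: emb_at)
    also have "\<dots> = emb k \<sigma> (mat_mul k A B) i j" using ab inj by (simp add: emb_at mat_mul_def)
    finally show ?thesis .
  next
    case False
    then have "\<And>l. emb k \<sigma> A i l * emb k \<sigma> B l j = 0" by (auto simp: emb_off)
    then show ?thesis using False by (simp add: mat_mul_def emb_off)
  qed
qed

lemma emb_word_cons:
  assumes inj: "inj_on \<sigma> {..<k}" and sub: "\<sigma> ` {..<k} \<subseteq> {..<r}"
  shows "word_eval r (\<lambda>x. emb k \<sigma> (a x)) (x#w) = emb k \<sigma> (word_eval k a (x#w))"
proof (induction w arbitrary: x)
  case Nil
  have "mat_mul r (emb k \<sigma> (a x)) (mat_one r) = emb k \<sigma> (a x)"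
    by (rule right_one) (use sub in \<open>rule emb_outside\<close>)
  also have "\<dots> = emb k \<sigma> (mat_mul k (a x) (mat_one k))"
    by (rule emb_cong[symmetric]) (simp add: right_one mat_mul_def mat_one_def if_distrib cong: if_cong)
  finally show ?case by simp
next
  case (Cons y w)
  then show ?case by (simp add: emb_mul[OF inj sub])
qed

lemma emb_word:
  assumes "inj_on \<sigma> {..<k}" "\<sigma> ` {..<k} \<subseteq> {..<r}" "w \<noteq> []"
  shows "word_eval r (\<lambda>x. emb k \<sigma> (a x)) w = emb k \<sigma> (word_eval k a w)"
  using assms emb_word_cons by (cases w) auto

lemma emb_nc:
  assumes "inj_on \<sigma> {..<k}" "\<sigma> ` {..<k} \<subseteq> {..<r}" "c [] = 0"
  shows "nc_eval r c (\<lambda>x. emb k \<sigma> (a x)) = emb k \<sigma> (nc_eval k c a)"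
proof (intro ext)
  fix i j
  have "nc_eval r c (\<lambda>x. emb k \<sigma> (a x)) i j = (\<Sum>w\<in>{w. c w \<noteq> 0}. c w * emb k \<sigma> (word_eval k a w) i j)"
    unfolding nc_eval_def
  proof (rule sum.cong[OF refl])
    fix w assume "w \<in> {w. c w \<noteq> 0}"
    then have "w \<noteq> []" using assms(3) by auto
    then show "c w * word_eval r (\<lambda>x. emb k \<sigma> (a x)) w i j = c w * emb k \<sigma> (word_eval k a w) i j"
      by (simp add: emb_word[OF assms(1,2) \<open>w \<noteq> []\<close>])
  qed
  also have "\<dots> = emb k \<sigma> (nc_eval k c a) i j"
    by (cases "i \<in> \<sigma>`{..<k} \<and> j \<in> \<sigma>`{..<k}") (auto simp: emb_def nc_eval_def)
  finally show "nc_eval r c (\<lambda>x. emb k \<sigma> (a x)) i j = emb k \<sigma> (nc_eval k c a) i j" .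
qed

lemma emb_upper:
  assumes "strict_mono \<sigma>" "\<sigma> ` {..<k} \<subseteq> {..<r}" "A \<in> upper_tri k"
  shows "emb k \<sigma> A \<in> upper_tri r"
  unfolding upper_tri_def
proof (clarify)
  fix i j assume h: "r \<le> i \<or> r \<le> j \<or> j < i"
  have inj: "inj_on \<sigma> {..<k}" using assms(1) strict_mono_imp_inj_on by blast
  show "emb k \<sigma> A i j = 0"
  proof (cases "i \<in> \<sigma>`{..<k} \<and> j \<in> \<sigma>`{..<k}")
    case True
    then obtain a b where ab: "a<k" "b<k" "i = \<sigma> a" "j = \<sigma> b" by auto
    then have "j < i" using h assms(2) by auto
    then have "b < a" using ab assms(1) strict_mono_less by blast
    then show ?thesis using ab emb_at[OF inj ab(1,2), of A] upper_triD[OF assms(3), of a b] by metis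
  qed (simp add: emb_off)
qed

lemma emb_single:
  assumes inj: "inj_on \<sigma> {..<k}" and "a0<k" "b0<k"
    and M: "\<And>a b. \<not>(a = a0 \<and> b = b0) \<Longrightarrow> M a b = 0"
  shows "emb k \<sigma> M i j = (if i = \<sigma> a0 \<and> j = \<sigma> b0 then M a0 b0 else 0)"
proof (cases "i \<in> \<sigma>`{..<k} \<and> j \<in> \<sigma>`{..<k}")
  case True
  then obtain a b where ab: "a<k" "b<k" "i = \<sigma> a" "j = \<sigma> b" by auto
  have e: "emb k \<sigma> M i j = M a b" using ab inj emb_at by simp
  show ?thesis
  proof (cases "a = a0 \<and> b = b0")
    case True then show ?thesis using e ab by simp
  next
    case False
    then have "\<not>(i = \<sigma> a0 \<and> j = \<sigma> b0)" using ab inj assms(2,3) by (auto dest: inj_onD)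
    then show ?thesis using e M False by auto
  qed
next
  case False
  then show ?thesis using assms(2,3) by (auto simp: emb_off)
qed

lemma mat_mul_assoc: "mat_mul r (mat_mul r A B) C = mat_mul r A (mat_mul r B C)"
proof (intro ext)
  fix i j
  show "mat_mul r (mat_mul r A B) C i j = mat_mul r A (mat_mul r B C) i j"
  proof (cases "i<r \<and> j<r")
    case True
    have "mat_mul r (mat_mul r A B) C i j = (\<Sum>l<r. (\<Sum>k<r. A i k * B k l) * C l j)"
      using True by (auto simp: mat_mul_def intro!: sum.cong)
    also have "\<dots> = (\<Sum>l<r. \<Sum>k<r. A i k * B k l * C l j)" by (simp add: sum_distrib_right)
    also have "\<dots> = (\<Sum>k<r. \<Sum>l<r. A i k * B k l * C l j)" by (rule sum.swap)
    also have "\<dots> = (\<Sum>k<r. A i k * (\<Sum>l<r. B k l * C l j))" by (simp add: sum_distrib_left mult.assoc)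
    also have "\<dots> = mat_mul r A (mat_mul r B C) i j"
      using True by (auto simp: mat_mul_def intro!: sum.cong)
    finally show ?thesis .
  qed (simp add: mat_mul_vanish)
qed

lemma mat_mul_sum_right:
  "mat_mul r A (\<lambda>i j. \<Sum>w\<in>S. f w * M w i j) = (\<lambda>i j. \<Sum>w\<in>S. f w * mat_mul r A (M w) i j)"
proof (intro ext)
  fix i j
  show "mat_mul r A (\<lambda>i j. \<Sum>w\<in>S. f w * M w i j) i j = (\<Sum>w\<in>S. f w * mat_mul r A (M w) i j)"
  proof (cases "i<r \<and> j<r")
    case True
    have "mat_mul r A (\<lambda>i j. \<Sum>w\<in>S. f w * M w i j) i j = (\<Sum>k<r. \<Sum>w\<in>S. A i k * (f w * M w k j))"
      using True by (simp add: mat_mul_def sum_distrib_left)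
    also have "\<dots> = (\<Sum>w\<in>S. \<Sum>k<r. A i k * (f w * M w k j))" by (rule sum.swap)
    also have "\<dots> = (\<Sum>w\<in>S. f w * mat_mul r A (M w) i j)"
      using True by (simp add: mat_mul_def sum_distrib_left mult.left_commute)
    finally show ?thesis .
  qed (simp add: mat_mul_vanish)
qed

lemma mat_mul_sum_left:
  "mat_mul r (\<lambda>i j. \<Sum>w\<in>S. f w * M w i j) A = (\<lambda>i j. \<Sum>w\<in>S. f w * mat_mul r (M w) A i j)"
proof (intro ext)
  fix i j
  show "mat_mul r (\<lambda>i j. \<Sum>w\<in>S. f w * M w i j) A i j = (\<Sum>w\<in>S. f w * mat_mul r (M w) A i j)"
  proof (cases "i<r \<and> j<r")
    case True
    have "mat_mul r (\<lambda>i j. \<Sum>w\<in>S. f w * M w i j) A i j = (\<Sum>k<r. \<Sum>w\<in>S. f w * M w i k * A k j)"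
      using True by (simp add: mat_mul_def sum_distrib_right)
    also have "\<dots> = (\<Sum>w\<in>S. \<Sum>k<r. f w * M w i k * A k j)" by (rule sum.swap)
    also have "\<dots> = (\<Sum>w\<in>S. f w * mat_mul r (M w) A i j)"
      using True by (simp add: mat_mul_def sum_distrib_left mult.assoc)
    finally show ?thesis .
  qed (simp add: mat_mul_vanish)
qed

lemma HG_cancel:
  assumes "mat_mul r H G = mat_one r" "\<And>i j. \<not>(i<r \<and> j<r) \<Longrightarrow> X i j = 0"
  shows "mat_mul r H (mat_mul r G X) = X"
  using assms left_one by (metis mat_mul_assoc)

lemma conj_word_cons:
  assumes "\<forall>y\<in>set (x#w). a y \<in> upper_tri r" "mat_mul r H G = mat_one r"
  shows "word_eval r (\<lambda>k. mat_mul r (mat_mul r G (a k)) H) (x#w)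
       = mat_mul r (mat_mul r G (word_eval r a (x#w))) H"
  using assms(1)
proof (induction w arbitrary: x)
  case Nil
  have ax: "a x \<in> upper_tri r" using Nil by simp
  have "mat_mul r (mat_mul r (mat_mul r G (a x)) H) (mat_one r) = mat_mul r (mat_mul r G (a x)) H"
    by (rule right_one) (simp add: mat_mul_vanish)
  moreover have "mat_mul r (a x) (mat_one r) = a x"
    by (rule right_one) (simp add: upper_vanish[OF ax])
  ultimately show ?case by simp
next
  case (Cons y w)
  have IH: "word_eval r (\<lambda>k. mat_mul r (mat_mul r G (a k)) H) (y#w)
       = mat_mul r (mat_mul r G (word_eval r a (y#w))) H" using Cons by simp
  have "word_eval r (\<lambda>k. mat_mul r (mat_mul r G (a k)) H) (x#y#w)
     = mat_mul r G (mat_mul r (a x) (mat_mul r H (mat_mul r G (mat_mul r (word_eval r a (y#w)) H))))"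
    using IH by (simp add: mat_mul_assoc)
  also have "\<dots> = mat_mul r G (mat_mul r (a x) (mat_mul r (word_eval r a (y#w)) H))"
    using HG_cancel[OF assms(2)] by (simp add: mat_mul_vanish)
  finally show ?case by (simp add: mat_mul_assoc)
qed

lemma conj_nc:
  assumes "nc_poly m c" "c [] = 0" "\<forall>k<m. a k \<in> upper_tri r" "mat_mul r H G = mat_one r"
  shows "nc_eval r c (\<lambda>k. mat_mul r (mat_mul r G (a k)) H) = mat_mul r (mat_mul r G (nc_eval r c a)) H"
proof -
  have "nc_eval r c (\<lambda>k. mat_mul r (mat_mul r G (a k)) H)
     = (\<lambda>i j. \<Sum>w\<in>{w. c w \<noteq> 0}. c w * mat_mul r (mat_mul r G (word_eval r a w)) H i j)"
    unfolding nc_eval_def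
  proof (intro ext sum.cong[OF refl])
    fix i j w assume "w \<in> {w. c w \<noteq> 0}"
    then have "w \<noteq> []" "\<forall>y\<in>set w. a y \<in> upper_tri r"
      using assms(2,3) nc_poly_letters[OF assms(1)] by auto
    then show "c w * word_eval r (\<lambda>k. mat_mul r (mat_mul r G (a k)) H) w i j =
         c w * mat_mul r (mat_mul r G (word_eval r a w)) H i j"
      using conj_word_cons[OF _ assms(4)] by (cases w) auto
  qed
  also have "\<dots> = mat_mul r (mat_mul r G (nc_eval r c a)) H"
    unfolding nc_eval_def mat_mul_sum_right mat_mul_sum_left ..
  finally show ?thesis .
qed

definition evm :: "'a::comm_ring_1 poly sqmat \<Rightarrow> 'a \<Rightarrow> 'a sqmat" where
  "evm A t = (\<lambda>i j. poly (A i j) t)"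

lemma evm_mul: "evm (mat_mul r A B) t = mat_mul r (evm A t) (evm B t)"
  by (auto simp: evm_def mat_mul_def poly_sum intro!: ext)

lemma evm_one: "evm (mat_one r) t = mat_one r"
  by (auto simp: evm_def mat_one_def intro!: ext)

lemma evm_word: "evm (word_eval r A w) t = word_eval r (\<lambda>x. evm (A x) t) w"
  by (induction w) (auto simp: evm_mul evm_one)

lemma evm_nc: "evm (nc_eval r (\<lambda>w. [:c w:]) A) t = nc_eval r c (\<lambda>x. evm (A x) t)"
  by (auto simp: evm_def nc_eval_def poly_sum intro!: ext sum.cong simp flip: evm_word[unfolded evm_def])


definition trip :: "nat \<Rightarrow> 'a \<Rightarrow> 'a \<Rightarrow> 'a \<Rightarrow> 'a::comm_ring_1 sqmat" where
  "trip s x y z = (\<lambda>i j. if i = 0 \<and> j = s then x else if i = 1 \<and> j = Suc s then y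
      else if i = 0 \<and> j = Suc s then z else 0)"

lemma nc_in_tri:
  assumes "nc_poly m c" "poly_image m c s = {mat_zero}" "2 \<le> s"
    "\<forall>k<m. a k \<in> upper_tri (Suc (Suc s))"
  shows "nc_eval (Suc (Suc s)) c a \<in> upper_tri_t (Suc (Suc s)) (s - 1)"
  unfolding upper_tri_t_def
proof (intro CollectI conjI allI impI)
  show U: "nc_eval (Suc (Suc s)) c a \<in> upper_tri (Suc (Suc s))"
    using nc_eval_upper assms(1,4) by blast
  fix i j assume h: "j \<le> i + (s - 1)"
  show "nc_eval (Suc (Suc s)) c a i j = 0"
  proof (cases "i < Suc (Suc s) \<and> j < Suc (Suc s) \<and> i \<le> j")
    case True
    show ?thesis
      by (rule nc_window_zero[OF assms(1,2,4), of "min i 2"]) (use True h assms(3) in auto)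
  next
    case False
    then show ?thesis using upper_triD[OF U, of i j] by auto
  qed
qed

lemma tri_shape:
  assumes "T \<in> upper_tri_t (Suc (Suc s)) (s - 1)" "2 \<le> s"
  shows "T = trip s (T 0 s) (T 1 (Suc s)) (T 0 (Suc s))"
proof (intro ext)
  fix i j
  have U: "T \<in> upper_tri (Suc (Suc s))" and Z: "\<And>i j. j \<le> i + (s - 1) \<Longrightarrow> T i j = 0"
    using assms(1) by (auto simp: upper_tri_t_def)
  show "T i j = trip s (T 0 s) (T 1 (Suc s)) (T 0 (Suc s)) i j"
  proof (cases "(i = 0 \<and> j = s) \<or> (i = 1 \<and> j = Suc s) \<or> (i = 0 \<and> j = Suc s)")
    case True then show ?thesis using assms(2) by (auto simp: trip_def)
  next
    case False
    have "T i j = 0"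
    proof (cases "i < Suc (Suc s) \<and> j < Suc (Suc s) \<and> i \<le> j")
      case True
      then show ?thesis using False assms(2) by (intro Z) auto
    next
      case False
      then show ?thesis using upper_triD[OF U, of i j] by auto
    qed
    then show ?thesis using False by (auto simp: trip_def)
  qed
qed

lemma trip_tri:
  assumes "2 \<le> s"
  shows "trip s x y z \<in> upper_tri_t (Suc (Suc s)) (s - 1)"
  using assms by (auto simp: upper_tri_t_def upper_tri_def trip_def)

lemma in_image: "\<forall>k<m. b k \<in> upper_tri r \<Longrightarrow> nc_eval r c b \<in> poly_image m c r"
  unfolding poly_image_def by blast

lemma if0_times: "(if P then a else 0) * (b::'a::comm_ring_1) = (if P then a * b else 0)" by simp
lemma times_if0: "(b::'a::comm_ring_1) * (if P then a else 0) = (if P then b * a else 0)" by simp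

definition dg :: "nat \<Rightarrow> (nat \<Rightarrow> 'a) \<Rightarrow> 'a::comm_ring_1 sqmat" where
  "dg r d = (\<lambda>i j. if i<r \<and> j<r \<and> i = j then d i else 0)"

lemma dg_left: "mat_mul r (dg r d) A i j = (if i<r \<and> j<r then d i * A i j else 0)"
proof (cases "i<r \<and> j<r")
  case True
  then show ?thesis by (simp add: mat_mul_def dg_def if0_times times_if0)
qed (auto simp add: mat_mul_vanish)

lemma dg_right: "mat_mul r A (dg r d) i j = (if i<r \<and> j<r then A i j * d j else 0)"
proof (cases "i<r \<and> j<r")
  case True
  then show ?thesis by (simp add: mat_mul_def dg_def if0_times times_if0 cong: if_cong)
qed (auto simp add: mat_mul_vanish)

lemma dg_upper: "dg r d \<in> upper_tri r" by (auto simp: dg_def upper_tri_def)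

lemma dg_inv:
  assumes "\<forall>i. d i \<noteq> 0"
  shows "mat_mul r (dg r (\<lambda>i. inverse (d i :: 'a::field))) (dg r d) = mat_one r"
proof (intro ext)
  fix i j
  show "mat_mul r (dg r (\<lambda>i. inverse (d i :: 'a::field))) (dg r d) i j = mat_one r i j"
    unfolding dg_left using assms by (auto simp: dg_def mat_one_def)
qed

definition un :: "nat \<Rightarrow> nat \<Rightarrow> nat \<Rightarrow> 'a \<Rightarrow> 'a::comm_ring_1 sqmat" where
  "un r u v t = (\<lambda>i j. mat_one r i j + (if i = u \<and> j = v then t else 0))"

lemma un_left:
  assumes "u < r" "v < r"
  shows "mat_mul r (un r u v t) A i j = (if i<r \<and> j<r then A i j + (if i = u then t * A v j else 0) else 0)"
proof (cases "i<r \<and> j<r")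
  case True
  then show ?thesis using assms
    by (simp add: mat_mul_def un_def mat_one_def distrib_right sum.distrib if0_times times_if0 cong: if_cong)
qed (auto simp add: mat_mul_vanish)

lemma un_right:
  assumes "u < r" "v < r"
  shows "mat_mul r A (un r u v t) i j = (if i<r \<and> j<r then A i j + (if j = v then A i u * t else 0) else 0)"
proof (cases "i<r \<and> j<r")
  case True
  then show ?thesis using assms
    by (simp add: mat_mul_def un_def mat_one_def distrib_left sum.distrib if0_times times_if0 cong: if_cong)
qed (auto simp add: mat_mul_vanish)

lemma un_upper: "u < v \<Longrightarrow> v < r \<Longrightarrow> un r u v t \<in> upper_tri r"
  by (auto simp: un_def upper_tri_def mat_one_def)

lemma un_inv:
  assumes "u < v" "v < r"
  shows "mat_mul r (un r u v (-t)) (un r u v t) = mat_one r"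
proof (intro ext)
  fix i j
  show "mat_mul r (un r u v (-t)) (un r u v t) i j = mat_one r i j"
    unfolding un_left[OF order.strict_trans[OF assms] assms(2)] using assms by (auto simp: un_def mat_one_def)
qed


locale LP =
  fixes c :: "nat list \<Rightarrow> 'a::field" and m s :: nat
  assumes nc: "nc_poly m c" and c0: "c [] = 0" and s2: "2 \<le> s"
    and zs: "poly_image m c s = {mat_zero}"
begin

abbreviation Q where "Q x y z \<equiv> trip s x y z \<in> poly_image m c (Suc (Suc s))"

lemma conj_closure:
  assumes "P \<in> poly_image m c (Suc (Suc s))" "G \<in> upper_tri (Suc (Suc s))" "H \<in> upper_tri (Suc (Suc s))"
    "mat_mul (Suc (Suc s)) H G = mat_one (Suc (Suc s))"
  shows "mat_mul (Suc (Suc s)) (mat_mul (Suc (Suc s)) G P) H \<in> poly_image m c (Suc (Suc s))"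
proof -
  obtain a where a: "\<forall>k<m. a k \<in> upper_tri (Suc (Suc s))" "P = nc_eval (Suc (Suc s)) c a"
    using assms(1) unfolding poly_image_def by blast
  have "\<forall>k<m. mat_mul (Suc (Suc s)) (mat_mul (Suc (Suc s)) G (a k)) H \<in> upper_tri (Suc (Suc s))"
    using a assms by (auto intro!: mat_mul_upper)
  then have "nc_eval (Suc (Suc s)) c (\<lambda>k. mat_mul (Suc (Suc s)) (mat_mul (Suc (Suc s)) G (a k)) H)
      \<in> poly_image m c (Suc (Suc s))" by (rule in_image)
  then show ?thesis using conj_nc[OF nc c0 a(1) assms(4)] a(2) by simp
qed

lemma Cdiag:
  assumes "Q x y z" "\<forall>i. d i \<noteq> 0"
  shows "Q (d 0 * x / d s) (d 1 * y / d (Suc s)) (d 0 * z / d (Suc s))"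
proof -
  have "mat_mul (Suc (Suc s)) (mat_mul (Suc (Suc s)) (dg (Suc (Suc s)) d) (trip s x y z))
           (dg (Suc (Suc s)) (\<lambda>i. inverse (d i))) \<in> poly_image m c (Suc (Suc s))"
    by (rule conj_closure[OF assms(1) dg_upper dg_upper dg_inv[OF assms(2)]])
  moreover have "mat_mul (Suc (Suc s)) (mat_mul (Suc (Suc s)) (dg (Suc (Suc s)) d) (trip s x y z))
           (dg (Suc (Suc s)) (\<lambda>i. inverse (d i))) = trip s (d 0 * x / d s) (d 1 * y / d (Suc s)) (d 0 * z / d (Suc s))"
    using s2 by (auto intro!: ext simp: dg_left dg_right trip_def divide_inverse)
  ultimately show ?thesis by simp
qed

lemma Cz1:
  assumes "Q x y z"
  shows "Q x y (z - t * x)"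
proof -
  have "mat_mul (Suc (Suc s)) (mat_mul (Suc (Suc s)) (un (Suc (Suc s)) s (Suc s) t) (trip s x y z))
           (un (Suc (Suc s)) s (Suc s) (-t)) \<in> poly_image m c (Suc (Suc s))"
    by (rule conj_closure[OF assms(1) un_upper un_upper un_inv]) auto
  moreover have "mat_mul (Suc (Suc s)) (mat_mul (Suc (Suc s)) (un (Suc (Suc s)) s (Suc s) t) (trip s x y z))
           (un (Suc (Suc s)) s (Suc s) (-t)) = trip s x y (z - t * x)"
    using s2 by (auto intro!: ext simp: un_left un_right trip_def)
  ultimately show ?thesis by simp
qed

lemma Cz2:
  assumes "Q x y z"
  shows "Q x y (z + t * y)"
proof -
  have "mat_mul (Suc (Suc s)) (mat_mul (Suc (Suc s)) (un (Suc (Suc s)) 0 1 t) (trip s x y z))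
           (un (Suc (Suc s)) 0 1 (-t)) \<in> poly_image m c (Suc (Suc s))"
    by (rule conj_closure[OF assms(1) un_upper un_upper un_inv]) auto
  moreover have "mat_mul (Suc (Suc s)) (mat_mul (Suc (Suc s)) (un (Suc (Suc s)) 0 1 t) (trip s x y z))
           (un (Suc (Suc s)) 0 1 (-t)) = trip s x y (z + t * y)"
    using s2 by (auto intro!: ext simp: un_left un_right trip_def)
  ultimately show ?thesis by simp
qed


lemma Q000: "Q 0 0 0"
proof -
  have w0: "word_eval (Suc (Suc s)) (\<lambda>_. mat_zero :: 'a sqmat) (x#w) = mat_zero" for x w
    by (auto simp: mat_mul_def mat_zero_def fun_eq_iff)
  have "nc_eval (Suc (Suc s)) c (\<lambda>_. mat_zero :: 'a sqmat) = mat_zero"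
  proof (intro ext)
    fix i j
    show "nc_eval (Suc (Suc s)) c (\<lambda>_. mat_zero :: 'a sqmat) i j = mat_zero i j"
      unfolding nc_eval_def
    proof (rule trans[OF sum.neutral], clarify)
      fix w assume "c w \<noteq> 0"
      then have "w \<noteq> []" using c0 by auto
      then obtain x w' where xw: "w = x # w'" by (cases w) auto
      have e: "word_eval (Suc (Suc s)) (\<lambda>_. mat_zero :: 'a sqmat) w = mat_zero" unfolding xw by (rule w0)
      have "word_eval (Suc (Suc s)) (\<lambda>_. mat_zero :: 'a sqmat) w i j = mat_zero i j" by (rule fun_cong[OF fun_cong[OF e]])
      then show "c w * word_eval (Suc (Suc s)) (\<lambda>_. mat_zero :: 'a sqmat) w i j = 0"
        by (simp add: mat_zero_def)
    qed (simp add: mat_zero_def)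
  qed
  moreover have "nc_eval (Suc (Suc s)) c (\<lambda>_. mat_zero :: 'a sqmat) \<in> poly_image m c (Suc (Suc s))"
    by (rule in_image) (simp add: mat_zero_upper)
  moreover have "trip s 0 0 0 = (mat_zero :: 'a sqmat)" by (auto simp: trip_def mat_zero_def intro!: ext)
  ultimately show ?thesis by simp
qed

lemma witness:
  assumes "poly_image m c (Suc s) \<noteq> {mat_zero}"
  obtains a \<alpha> where "\<forall>k<m. a k \<in> upper_tri (Suc s)" "\<alpha> \<noteq> 0"
    "nc_eval (Suc s) c a = (\<lambda>i j. if i = 0 \<and> j = s then \<alpha> else 0)"
proof -
  have "nc_eval (Suc s) c (\<lambda>_. mat_zero :: 'a sqmat) \<in> poly_image m c (Suc s)"
    by (rule in_image) (simp add: mat_zero_upper)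
  moreover have "\<exists>P\<in>poly_image m c (Suc s). P \<noteq> mat_zero"
  proof (rule ccontr)
    assume "\<not> (\<exists>P\<in>poly_image m c (Suc s). P \<noteq> mat_zero)"
    then have "poly_image m c (Suc s) \<subseteq> {mat_zero}" by blast
    then show False using assms calculation by (metis subset_singletonD emptyE)
  qed
  then obtain P where P: "P \<in> poly_image m c (Suc s)" "P \<noteq> mat_zero" by blast
  then obtain a where a: "\<forall>k<m. a k \<in> upper_tri (Suc s)" "P = nc_eval (Suc s) c a"
    unfolding poly_image_def by blast
  have U: "P \<in> upper_tri (Suc s)" using a nc_eval_upper[OF nc] by blast
  have shape: "P = (\<lambda>i j. if i = 0 \<and> j = s then P 0 s else 0)"
  proof (intro ext)
    fix i j
    show "P i j = (if i = 0 \<and> j = s then P 0 s else 0)"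
    proof (cases "i = 0 \<and> j = s")
      case False
      have "P i j = 0"
      proof (cases "i < Suc s \<and> j < Suc s \<and> i \<le> j")
        case True
        show ?thesis
        proof (cases "1 \<le> i")
          case True
          then show ?thesis unfolding a(2)
            by (rule_tac nc_window_zero[OF nc zs a(1), of 1]) (use \<open>i < Suc s \<and> j < Suc s \<and> i \<le> j\<close> in auto)
        next
          case False
          then show ?thesis unfolding a(2)
            by (rule_tac nc_window_zero[OF nc zs a(1), of 0]) (use \<open>i < Suc s \<and> j < Suc s \<and> i \<le> j\<close> \<open>\<not>(i = 0 \<and> j = s)\<close> in auto)
        qed
      next
        case False
        then show ?thesis using upper_triD[OF U, of i j] by auto
      qed
      then show ?thesis using False by auto
    qed simp
  qed
  have "P 0 s \<noteq> 0"
  proof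
    assume "P 0 s = 0"
    then have "P = mat_zero" unfolding mat_zero_def by (subst shape) (auto simp: fun_eq_iff)
    then show False using P by simp
  qed
  then show ?thesis using that a shape by metis
qed

lemma emb_point:
  assumes sm: "strict_mono \<sigma>" and sub: "\<sigma> ` {..<Suc s} \<subseteq> {..<Suc (Suc s)}"
    and a: "\<forall>k<m. a k \<in> upper_tri (Suc s)"
    and N: "nc_eval (Suc s) c a = (\<lambda>i j. if i = 0 \<and> j = s then \<alpha> else 0)"
  shows "\<forall>k<m. emb (Suc s) \<sigma> (a k) \<in> upper_tri (Suc (Suc s))"
    "nc_eval (Suc (Suc s)) c (\<lambda>k. emb (Suc s) \<sigma> (a k)) = (\<lambda>i j. if i = \<sigma> 0 \<and> j = \<sigma> s then \<alpha> else 0)"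
proof -
  have inj: "inj_on \<sigma> {..<Suc s}" using sm strict_mono_imp_inj_on by blast
  show "\<forall>k<m. emb (Suc s) \<sigma> (a k) \<in> upper_tri (Suc (Suc s))"
    using a emb_upper[OF sm sub] by blast
  have "nc_eval (Suc (Suc s)) c (\<lambda>k. emb (Suc s) \<sigma> (a k)) = emb (Suc s) \<sigma> (nc_eval (Suc s) c a)"
    by (rule emb_nc[of \<sigma> "Suc s" "Suc (Suc s)" c a, OF inj sub c0])
  also have "\<dots> = (\<lambda>i j. if i = \<sigma> 0 \<and> j = \<sigma> s then \<alpha> else 0)"
    by (intro ext, subst emb_single[OF inj, of 0 s]) (auto simp: N)
  finally show "nc_eval (Suc (Suc s)) c (\<lambda>k. emb (Suc s) \<sigma> (a k)) = (\<lambda>i j. if i = \<sigma> 0 \<and> j = \<sigma> s then \<alpha> else 0)" .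
qed

end


context LP
begin

lemma base_points:
  assumes a: "\<forall>k<m. a k \<in> upper_tri (Suc s)"
    and N: "nc_eval (Suc s) c a = (\<lambda>i j. if i = 0 \<and> j = s then \<alpha> else 0)"
  shows "Q \<alpha> 0 0" "Q 0 \<alpha> 0" "Q 0 0 \<alpha>"
proof -
  have sm1: "strict_mono (id :: nat \<Rightarrow> nat)" by (simp add: strict_mono_def)
  have sm2: "strict_mono Suc" by (simp add: strict_mono_def)
  have sm3: "strict_mono (\<lambda>x::nat. if x = 0 then 0 else Suc x)" by (auto simp: strict_mono_def)
  have sb1: "id ` {..<Suc s} \<subseteq> {..<Suc (Suc s)}" by auto
  have sb2: "Suc ` {..<Suc s} \<subseteq> {..<Suc (Suc s)}" by auto
  have sb3: "(\<lambda>x::nat. if x = 0 then 0 else Suc x) ` {..<Suc s} \<subseteq> {..<Suc (Suc s)}" by auto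
  note p1 = emb_point[OF sm1 sb1 a N] and p2 = emb_point[OF sm2 sb2 a N] and p3 = emb_point[OF sm3 sb3 a N]
  have "trip s \<alpha> 0 0 = (\<lambda>i j. if i = id 0 \<and> j = id s then \<alpha> else 0)"
    using s2 by (auto simp: trip_def intro!: ext)
  then show "Q \<alpha> 0 0" using in_image[OF p1(1), of c] p1(2) by simp
  have "trip s 0 \<alpha> 0 = (\<lambda>i j. if i = Suc 0 \<and> j = Suc s then \<alpha> else 0)"
    using s2 by (auto simp: trip_def intro!: ext)
  then show "Q 0 \<alpha> 0" using in_image[OF p2(1), of c] p2(2) by simp
  have "trip s 0 0 \<alpha> = (\<lambda>i j. if i = (\<lambda>x::nat. if x = 0 then 0 else Suc x) 0 \<and>
          j = (\<lambda>x::nat. if x = 0 then 0 else Suc x) s then \<alpha> else 0)"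
    using s2 by (auto simp: trip_def intro!: ext)
  then show "Q 0 0 \<alpha>" using in_image[OF p3(1), of c] p3(2) by simp
qed

lemma xy_point:
  assumes inf: "infinite (UNIV :: 'a set)" and a: "\<forall>k<m. a k \<in> upper_tri (Suc s)"
    and N: "nc_eval (Suc s) c a = (\<lambda>i j. if i = 0 \<and> j = s then \<alpha> else 0)" and al: "\<alpha> \<noteq> 0"
  shows "\<exists>x y z. x \<noteq> 0 \<and> y \<noteq> 0 \<and> Q x y z"
proof -
  have sm1: "strict_mono (id :: nat \<Rightarrow> nat)" by (simp add: strict_mono_def)
  have sm2: "strict_mono Suc" by (simp add: strict_mono_def)
  have sb1: "id ` {..<Suc s} \<subseteq> {..<Suc (Suc s)}" by auto
  have sb2: "Suc ` {..<Suc s} \<subseteq> {..<Suc (Suc s)}" by auto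
  define B1 where "B1 = (\<lambda>k. emb (Suc s) id (a k))"
  define B2 where "B2 = (\<lambda>k. emb (Suc s) Suc (a k))"
  note p1 = emb_point[OF sm1 sb1 a N, folded B1_def] and p2 = emb_point[OF sm2 sb2 a N, folded B2_def]
  have N1: "nc_eval (Suc (Suc s)) c B1 0 s = \<alpha>" using p1(2) by simp
  have N2: "nc_eval (Suc (Suc s)) c B2 1 (Suc s) = \<alpha>" using p2(2) by simp
  define BP where "BP = (\<lambda>k i j. [:B1 k i j, B2 k i j - B1 k i j:])"
  define Bt where "Bt t = (\<lambda>k i j. B1 k i j + t * (B2 k i j - B1 k i j))" for t
  have evBP: "(\<lambda>x. evm (BP x) t) = Bt t" for t by (simp add: evm_def BP_def Bt_def)
  have Bt0: "Bt 0 = B1" and Bt1: "Bt 1 = B2" by (simp_all add: Bt_def)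
  have Ut: "\<forall>k<m. Bt t k \<in> upper_tri (Suc (Suc s))" for t
    using p1(1) p2(1) by (auto simp: Bt_def B1_def B2_def upper_tri_def)
  define NP where "NP = nc_eval (Suc (Suc s)) (\<lambda>w. [:c w:]) BP"
  have evNP: "evm NP t = nc_eval (Suc (Suc s)) c (Bt t)" for t
    using evm_nc[of "Suc (Suc s)" c BP t] evBP by (simp add: NP_def)
  have polyNP: "poly (NP i j) t = nc_eval (Suc (Suc s)) c (Bt t) i j" for i j t
    using fun_cong[OF fun_cong[OF evNP[of t]], of i j] by (simp add: evm_def)
  have nz1: "NP 0 s \<noteq> 0"
  proof
    assume "NP 0 s = 0"
    then have "poly (NP 0 s) 0 = 0" by simp
    then show False using polyNP[of 0 s 0] Bt0 N1 al by simp
  qed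
  have nz2: "NP 1 (Suc s) \<noteq> 0"
  proof
    assume "NP 1 (Suc s) = 0"
    then have "poly (NP 1 (Suc s)) 1 = 0" by simp
    then show False using polyNP[of 1 "Suc s" 1] Bt1 N2 al by simp
  qed
  have fin: "finite ({t. poly (NP 0 s) t = 0} \<union> {t. poly (NP 1 (Suc s)) t = 0})"
    using poly_roots_finite nz1 nz2 by blast
  obtain t where t: "t \<notin> {t. poly (NP 0 s) t = 0} \<union> {t. poly (NP 1 (Suc s)) t = 0}"
    using ex_new_if_finite[OF inf fin] by blast
  define P where "P = nc_eval (Suc (Suc s)) c (Bt t)"
  have Pim: "P \<in> poly_image m c (Suc (Suc s))" unfolding P_def using in_image Ut by blast
  have "P \<in> upper_tri_t (Suc (Suc s)) (s - 1)" unfolding P_def using nc_in_tri[OF nc zs s2 Ut] .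
  then have "P = trip s (P 0 s) (P 1 (Suc s)) (P 0 (Suc s))" using tri_shape s2 by blast
  then have "Q (P 0 s) (P 1 (Suc s)) (P 0 (Suc s))" using Pim by simp
  moreover have "P 0 s \<noteq> 0" "P 1 (Suc s) \<noteq> 0" using t polyNP unfolding P_def by auto
  ultimately show ?thesis by blast
qed

lemma all_Q:
  assumes inf: "infinite (UNIV :: 'a set)" and ne: "poly_image m c (Suc s) \<noteq> {mat_zero}"
  shows "Q X Y Z"
proof -
  obtain a \<alpha> where a: "\<forall>k<m. a k \<in> upper_tri (Suc s)" and al: "\<alpha> \<noteq> 0"
    and N: "nc_eval (Suc s) c a = (\<lambda>i j. if i = 0 \<and> j = s then \<alpha> else 0)"
    using witness[OF ne] by blast
  note bp = base_points[OF a N]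
  obtain x0 y0 z0 where x0: "x0 \<noteq> 0" and y0: "y0 \<noteq> 0" and q0: "Q x0 y0 z0"
    using xy_point[OF inf a N al] by blast
  have s0: "s \<noteq> 0" "s \<noteq> 1" "Suc s \<noteq> 1" using s2 by auto
  show ?thesis
  proof (cases "X \<noteq> 0")
    case X: True
    show ?thesis
    proof (cases "Y \<noteq> 0")
      case Y: True
      have "Q x0 y0 (z0 - (z0/x0) * x0)" by (rule Cz1[OF q0])
      then have q1: "Q x0 y0 0" using x0 by simp
      define d where "d = (\<lambda>i::nat. if i = s then x0 / X else if i = 1 then Y / y0 else (1::'a))"
      have dnz: "\<forall>i. d i \<noteq> 0" using x0 y0 X Y by (simp add: d_def)
      have "Q (d 0 * x0 / d s) (d 1 * y0 / d (Suc s)) (d 0 * 0 / d (Suc s))" by (rule Cdiag[OF q1 dnz])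
      then have q2: "Q X Y 0" using s0 x0 y0 X Y by (simp add: d_def)
      have "Q X Y (0 - (-Z/X) * X)" by (rule Cz1[OF q2])
      then show ?thesis using X by simp
    next
      case Y: False
      define d where "d = (\<lambda>i::nat. if i = s then \<alpha> / X else (1::'a))"
      have dnz: "\<forall>i. d i \<noteq> 0" using al X by (simp add: d_def)
      have "Q (d 0 * \<alpha> / d s) (d 1 * 0 / d (Suc s)) (d 0 * 0 / d (Suc s))" by (rule Cdiag[OF bp(1) dnz])
      then have q2: "Q X 0 0" using s0 al X by (simp add: d_def)
      have "Q X 0 (0 - (-Z/X) * X)" by (rule Cz1[OF q2])
      then show ?thesis using X Y by simp
    qed
  next
    case X: False
    show ?thesis
    proof (cases "Y \<noteq> 0")
      case Y: True
      define d where "d = (\<lambda>i::nat. if i = 1 then Y / \<alpha> else (1::'a))"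
      have dnz: "\<forall>i. d i \<noteq> 0" using al Y by (simp add: d_def)
      have "Q (d 0 * 0 / d s) (d 1 * \<alpha> / d (Suc s)) (d 0 * 0 / d (Suc s))" by (rule Cdiag[OF bp(2) dnz])
      then have q2: "Q 0 Y 0" using s0 al Y by (simp add: d_def)
      have "Q 0 Y (0 + (Z/Y) * Y)" by (rule Cz2[OF q2])
      then show ?thesis using X Y by simp
    next
      case Y: False
      show ?thesis
      proof (cases "Z = 0")
        case True then show ?thesis using X Y Q000 by simp
      next
        case Z: False
        define d where "d = (\<lambda>i::nat. if i = 0 then Z / \<alpha> else (1::'a))"
        have dnz: "\<forall>i. d i \<noteq> 0" using al Z by (simp add: d_def)
        have "Q (d 0 * 0 / d s) (d 1 * 0 / d (Suc s)) (d 0 * \<alpha> / d (Suc s))" by (rule Cdiag[OF bp(3) dnz])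
        then show ?thesis using s0 al X Y by (simp add: d_def)
      qed
    qed
  qed
qed

end

theorem lemma3p3:
  fixes c :: "nat list \<Rightarrow> 'a::field" and n m :: nat
  assumes "4 \<le> n" and "1 \<le> m"
    and "infinite (UNIV :: 'a set)"
    and "nc_poly m c"
    and "c [] = 0"
    and "has_ord m c (n - 2)"
  shows "poly_image m c n = upper_tri_t n (n - 3)"
proof -
  define s where "s = n - 2"
  have n: "n = Suc (Suc s)" and s2: "2 \<le> s" and n3: "n - 3 = s - 1" using assms(1) by (auto simp: s_def)
  have ord: "poly_image m c s = {mat_zero}" "poly_image m c (Suc s) \<noteq> {mat_zero}"
    using assms(6) unfolding has_ord_def s_def[symmetric] by simp_all
  interpret LP c m s using assms(4,5) s2 ord(1) by unfold_locales
  show ?thesis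
  proof
    show "poly_image m c n \<subseteq> upper_tri_t n (n - 3)"
    proof
      fix P assume "P \<in> poly_image m c n"
      then obtain a where a: "\<forall>k<m. a k \<in> upper_tri (Suc (Suc s))" "P = nc_eval (Suc (Suc s)) c a"
        unfolding poly_image_def n by blast
      show "P \<in> upper_tri_t n (n - 3)" unfolding n3 unfolding n a(2) by (rule nc_in_tri[OF nc zs s2 a(1)])
    qed
  next
    show "upper_tri_t n (n - 3) \<subseteq> poly_image m c n"
    proof
      fix T :: "'a sqmat" assume "T \<in> upper_tri_t n (n - 3)"
      then have "T \<in> upper_tri_t (Suc (Suc s)) (s - 1)" using n n3 by simp
      then have "T = trip s (T 0 s) (T 1 (Suc s)) (T 0 (Suc s))" using tri_shape s2 by blast
      moreover have "Q (T 0 s) (T 1 (Suc s)) (T 0 (Suc s))" by (rule all_Q[OF assms(3) ord(2)])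
      ultimately show "T \<in> poly_image m c n" unfolding n by simp
    qed
  qed
qed

end
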